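(* Let $(X,\Psi)$ be a $\sigma$-compact uniform space and $Y\subseteq X$. The following are equivalent: (1) $X$ satisfies $\textsf{S}_1(\Omega,\Omega_Y)$; (2) ONE has no winning strategy in the game ${\sf G}_1(\Omega,\Omega_Y)$ on $X$.
   Context: A uniformity on $X$ is a filter $\Psi$ on $X\times X$ whose members contain the diagonal, closed under $U\mapsto U^{-1}$, such that for each $U\in\Psi$ there is $V\in\Psi$ with $V\circ V\subseteq U$, and with intersection equal to the diagonal; $X$ has the topology with neighbourhood bases $\{U(x):U\in\Psi\}$, $U(x)=\{y:(x,y)\in U\}$. $\sigma$-compact: countable union of compact sets. $\Omega$: $\omega$-covers of $X$ (open covers $\mathcal{U}$ with $X\notin\mathcal{U}$ such that each finite subset of $X$ lies in some member). $\Omega_Y$: families of open subsets of $X$, none containing $Y$, such that each finite subset of $Y$ lies in some member. $\textsf{S}_1(\mathcal{A},\mathcal{B})$: for every sequence $(O_n)$ of elements of $\mathcal{A}$ there are $T_n\in O_n$ with $\{T_n\}\in\mathcal{B}$. Game ${\sf G}_1(\mathcal{A},\mathcal{B})$: in inning $n$ ONE chooses $O_n\in\mathcal{A}$, TWO responds with $T_n\in O_n$; TWO wins if $\{T_n:n\in\mathbb{N}\}\in\mathcal{B}$, else ONE wins. *)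

theory Defs
  imports "HOL-Analysis.Analysis"
begin

text \<open>The uniform space is the type class uniform_space: the filter uniformity
  on pairs, with the topology induced by it (open_uniformity).\<close>

definition sigma_compact_space :: "'a::topological_space itself \<Rightarrow> bool" where
  "sigma_compact_space _ \<longleftrightarrow>
     (\<exists>K :: nat \<Rightarrow> 'a set. (\<forall>n. compact (K n)) \<and> (\<Union>n. K n) = UNIV)"

definition omega_covers :: "'a::topological_space set set set" where
  "omega_covers = {\<U>. (\<forall>U\<in>\<U>. open U) \<and> \<Union>\<U> = UNIV \<and> UNIV \<notin> \<U> \<and>
      (\<forall>F. finite F \<longrightarrow> (\<exists>U\<in>\<U>. F \<subseteq> U))}"

definition omega_covers_of :: "'a::topological_space set \<Rightarrow> 'a set set set" where
  "omega_covers_of Y = {\<U>. (\<forall>U\<in>\<U>. open U) \<and> (\<forall>U\<in>\<U>. \<not> Y \<subseteq> U) \<and>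
      (\<forall>F. finite F \<and> F \<subseteq> Y \<longrightarrow> (\<exists>U\<in>\<U>. F \<subseteq> U))}"

definition S1 :: "'b set set \<Rightarrow> 'b set set \<Rightarrow> bool" where
  "S1 A B \<longleftrightarrow> (\<forall>Os :: nat \<Rightarrow> 'b set. (\<forall>n. Os n \<in> A) \<longrightarrow>
      (\<exists>T :: nat \<Rightarrow> 'b. (\<forall>n. T n \<in> Os n) \<and> range T \<in> B))"

text \<open>A strategy for ONE in G_1(A,B) maps the list of TWO's previous moves
  [T_0,...,T_(n-1)] to ONE's move O_n in A. It is winning if every play
  following it is lost by TWO.\<close>
definition ONE_winning_strategy_G1 :: "'b set set \<Rightarrow> 'b set set \<Rightarrow> ('b list \<Rightarrow> 'b set) \<Rightarrow> bool" where
  "ONE_winning_strategy_G1 A B \<sigma> \<longleftrightarrow> (\<forall>s. \<sigma> s \<in> A) \<and>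
     (\<forall>T :: nat \<Rightarrow> 'b. (\<forall>n. T n \<in> \<sigma> (map T [0..<n])) \<longrightarrow> range T \<notin> B)"

definition ONE_has_winning_strategy_G1 :: "'b set set \<Rightarrow> 'b set set \<Rightarrow> bool" where
  "ONE_has_winning_strategy_G1 A B \<longleftrightarrow> (\<exists>\<sigma>. ONE_winning_strategy_G1 A B \<sigma>)"

end

theory Submission
  imports Defs "HOL-Library.Nat_Bijection"
begin

lemma omega_finite_sub:
  fixes K :: "'a::topological_space set"
  assumes K: "compact K" and opn: "\<forall>U\<in>\<U>. open U"
  shows "finite A \<Longrightarrow> (\<forall>F. finite F \<and> F \<subseteq> K \<and> card F \<le> m \<longrightarrow> (\<exists>U\<in>\<U>. A \<union> F \<subseteq> U))
     \<Longrightarrow> \<exists>\<C>\<subseteq>\<U>. finite \<C> \<and> (\<forall>F. finite F \<and> F \<subseteq> K \<and> card F \<le> m \<longrightarrow> (\<exists>U\<in>\<C>. A \<union> F \<subseteq> U))"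
proof (induction m arbitrary: A)
  case 0
  then obtain U0 where "U0 \<in> \<U>" "A \<subseteq> U0" by force
  then show ?case
    by (intro exI[of _ "{U0}"]) auto
next
  case (Suc m)
  obtain U0 where U0: "U0 \<in> \<U>" "A \<subseteq> U0" using Suc.prems(2)[rule_format, of "{}"] by auto
  have "\<forall>x\<in>K. \<exists>\<C>\<subseteq>\<U>. finite \<C> \<and> (\<forall>F. finite F \<and> F \<subseteq> K \<and> card F \<le> m \<longrightarrow> (\<exists>U\<in>\<C>. insert x A \<union> F \<subseteq> U))"
  proof
    fix x assume x: "x \<in> K"
    show "\<exists>\<C>\<subseteq>\<U>. finite \<C> \<and> (\<forall>F. finite F \<and> F \<subseteq> K \<and> card F \<le> m \<longrightarrow> (\<exists>U\<in>\<C>. insert x A \<union> F \<subseteq> U))"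
    proof (rule Suc.IH)
      show "finite (insert x A)" using Suc.prems(1) by simp
      show "\<forall>F. finite F \<and> F \<subseteq> K \<and> card F \<le> m \<longrightarrow> (\<exists>U\<in>\<U>. insert x A \<union> F \<subseteq> U)"
      proof (intro allI impI)
        fix F assume F: "finite F \<and> F \<subseteq> K \<and> card F \<le> m"
        then have "finite (insert x F) \<and> insert x F \<subseteq> K \<and> card (insert x F) \<le> Suc m"
          using x by (auto simp: card_insert_if)
        then obtain U where "U \<in> \<U>" "A \<union> insert x F \<subseteq> U" using Suc.prems(2) by blast
        then show "\<exists>U\<in>\<U>. insert x A \<union> F \<subseteq> U" by auto
      qed
    qed
  qed
  then obtain CC where CC: "\<And>x. x \<in> K \<Longrightarrow> CC x \<subseteq> \<U> \<and> finite (CC x) \<and>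
      (\<forall>F. finite F \<and> F \<subseteq> K \<and> card F \<le> m \<longrightarrow> (\<exists>U\<in>CC x. insert x A \<union> F \<subseteq> U))"
    by metis
  define N where "N x = \<Inter>{C\<in>CC x. x \<in> C}" for x
  have Nopen: "open (N x)" if "x \<in> K" for x
    unfolding N_def using CC[OF that] opn by (intro open_Inter) auto
  have NK: "K \<subseteq> (\<Union>x\<in>K. N x)" unfolding N_def by auto
  obtain D where D: "D \<subseteq> K" "finite D" "K \<subseteq> (\<Union>x\<in>D. N x)"
    using compactE_image[OF K, of K N] Nopen NK by metis
  show ?case
  proof (intro exI[of _ "insert U0 (\<Union>x\<in>D. CC x)"] conjI allI impI)
    show "insert U0 (\<Union>x\<in>D. CC x) \<subseteq> \<U>" using U0 CC D by blast
    show "finite (insert U0 (\<Union>x\<in>D. CC x))" using CC D by auto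
    fix F assume F: "finite F \<and> F \<subseteq> K \<and> card F \<le> Suc m"
    show "\<exists>U\<in>insert U0 (\<Union>x\<in>D. CC x). A \<union> F \<subseteq> U"
    proof (cases "F = {}")
      case True then show ?thesis using U0 by auto
    next
      case False
      then obtain y where y: "y \<in> F" by auto
      then have "y \<in> K" using F by auto
      then obtain x where x: "x \<in> D" "y \<in> N x" using D by auto
      have xK: "x \<in> K" using x D by auto
      have "finite (F - {y}) \<and> F - {y} \<subseteq> K \<and> card (F - {y}) \<le> m"
        using F y by auto
      then obtain U where U: "U \<in> CC x" "insert x A \<union> (F - {y}) \<subseteq> U"
        using CC[OF xK] by blast
      have "y \<in> U" using x(2) U unfolding N_def by auto
      then have "A \<union> F \<subseteq> U" using U by auto
      then show ?thesis using U x by auto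
    qed
  qed
qed

lemma hard_dir:
  fixes Y :: "'a::topological_space set" and L :: "nat \<Rightarrow> 'a set"
  assumes S: "S1 (omega_covers :: 'a set set set) (omega_covers_of Y)"
    and Pfin: "finite (- Y)"
    and Lcomp: "\<And>m. compact (L m)"
    and Lbig: "\<And>F. finite F \<Longrightarrow> \<exists>N. \<forall>m\<ge>N. F \<subseteq> L m"
  shows "\<not> ONE_winning_strategy_G1 (omega_covers :: 'a set set set) (omega_covers_of Y) \<sigma>"
proof
  assume w: "ONE_winning_strategy_G1 (omega_covers :: 'a set set set) (omega_covers_of Y) \<sigma>"
  have \<sigma>\<Omega>: "\<sigma> s \<in> omega_covers" for s using w unfolding ONE_winning_strategy_G1_def by auto
  have \<sigma>open: "\<And>U. U \<in> \<sigma> s \<Longrightarrow> open U" for s using \<sigma>\<Omega>[of s] unfolding omega_covers_def by auto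
  have \<sigma>univ: "UNIV \<notin> \<sigma> s" for s using \<sigma>\<Omega>[of s] unfolding omega_covers_def by auto
  have \<sigma>fin: "\<And>F. finite F \<Longrightarrow> \<exists>U\<in>\<sigma> s. F \<subseteq> U" for s using \<sigma>\<Omega>[of s] unfolding omega_covers_def by auto
  have "\<exists>\<C>\<subseteq>{U\<in>\<sigma> s. - Y \<subseteq> U}. finite \<C> \<and>
     (\<forall>F. finite F \<and> F \<subseteq> L (length s) \<and> card F \<le> length s \<longrightarrow> (\<exists>U\<in>\<C>. {} \<union> F \<subseteq> U))" for s
  proof (rule omega_finite_sub[OF Lcomp])
    show "\<forall>U\<in>{U \<in> \<sigma> s. - Y \<subseteq> U}. open U" using \<sigma>open by auto
    show "finite ({}::'a set)" by simp
    show "\<forall>F. finite F \<and> F \<subseteq> L (length s) \<and> card F \<le> length s \<longrightarrow> (\<exists>U\<in>{U \<in> \<sigma> s. - Y \<subseteq> U}. {} \<union> F \<subseteq> U)"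
    proof (intro allI impI)
      fix F assume "finite F \<and> F \<subseteq> L (length s) \<and> card F \<le> length s"
      then have "finite (- Y \<union> F)" using Pfin by auto
      then obtain U where "U \<in> \<sigma> s" "- Y \<union> F \<subseteq> U" using \<sigma>fin by blast
      then show "\<exists>U\<in>{U \<in> \<sigma> s. - Y \<subseteq> U}. {} \<union> F \<subseteq> U" by auto
    qed
  qed
  then obtain Ch where Ch: "\<And>s. Ch s \<subseteq> {U\<in>\<sigma> s. - Y \<subseteq> U} \<and> finite (Ch s) \<and>
     (\<forall>F. finite F \<and> F \<subseteq> L (length s) \<and> card F \<le> length s \<longrightarrow> (\<exists>U\<in>Ch s. F \<subseteq> U))"
    by (simp only: sup_bot_left) metis
  have Chne: "Ch s \<noteq> {}" for s using Ch[of s] by force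
  define H where "H = rec_nat {[]} (\<lambda>k Hk. (\<lambda>(s,c). s @ [c]) ` (SIGMA s:Hk. Ch s))"
  have H0: "H 0 = {[]}" unfolding H_def by simp
  have HS: "H (Suc k) = (\<lambda>(s,c). s @ [c]) ` (SIGMA s:H k. Ch s)" for k unfolding H_def by simp
  have Hfin: "finite (H k)" for k
  proof (induction k)
    case 0 show ?case by (simp add: H0)
  next
    case (Suc k)
    have "finite (SIGMA s:H k. Ch s)" using Suc Ch by (intro finite_SigmaI) auto
    then show ?case unfolding HS by (rule finite_imageI)
  qed
  have Hlen: "\<forall>s\<in>H k. length s = k" for k
    by (induction k) (auto simp: H0 HS)
  have Hne: "H k \<noteq> {}" for k
    by (induction k) (use Chne in \<open>auto simp: H0 HS\<close>)
  define Om where "Om k = {\<Inter>s\<in>H k. c s | c. \<forall>s\<in>H k. c s \<in> Ch s}" for k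
  define WW where "WW n = \<Union>{Om k | k. fst (prod_decode k) = n}" for n
  have WW\<Omega>: "WW n \<in> omega_covers" for n
  proof -
    have mem: "open V \<and> V \<noteq> UNIV" if hV: "V \<in> WW n" for V
    proof -
      obtain k where "V \<in> Om k" using hV unfolding WW_def by blast
      then obtain c where V: "V = (\<Inter>s\<in>H k. c s)" and c: "\<forall>s\<in>H k. c s \<in> Ch s"
        unfolding Om_def by blast
      have "open V" unfolding V
      proof (rule open_INT[OF Hfin], rule ballI)
        fix s assume "s \<in> H k"
        then have "c s \<in> \<sigma> s" using c Ch[of s] by blast
        then show "open (c s)" by (rule \<sigma>open)
      qed
      moreover obtain s0 where s0: "s0 \<in> H k" using Hne by blast
      have "c s0 \<in> \<sigma> s0" using c s0 Ch[of s0] by blast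
      then have "c s0 \<noteq> UNIV" using \<sigma>univ[of s0] by auto
      then have "V \<noteq> UNIV" unfolding V using s0 by blast
      ultimately show ?thesis by blast
    qed
    have cov: "\<exists>V\<in>WW n. F \<subseteq> V" if F: "finite F" for F
    proof -
      obtain N where N: "\<forall>m\<ge>N. F \<subseteq> L m" using Lbig[OF F] by blast
      define k where "k = prod_encode (n, N + card F)"
      have kge: "N + card F \<le> k" unfolding k_def by (rule le_prod_encode_2)
      have kn: "fst (prod_decode k) = n" unfolding k_def by simp
      define c where "c s = (SOME U. U \<in> Ch s \<and> F \<subseteq> U)" for s
      have c: "c s \<in> Ch s \<and> F \<subseteq> c s" if "s \<in> H k" for s
      proof -
        have "length s = k" using Hlen that by blast
        then have "\<exists>U\<in>Ch s. F \<subseteq> U" using Ch[of s] F N kge by auto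
        then show ?thesis unfolding c_def by (metis (mono_tags, lifting) someI_ex)
      qed
      have "(\<Inter>s\<in>H k. c s) \<in> Om k" unfolding Om_def using c by blast
      then have "(\<Inter>s\<in>H k. c s) \<in> WW n" unfolding WW_def using kn by blast
      moreover have "F \<subseteq> (\<Inter>s\<in>H k. c s)" using c by blast
      ultimately show ?thesis by blast
    qed
    have "\<Union>(WW n) = UNIV"
    proof -
      have "x \<in> \<Union>(WW n)" for x using cov[of "{x}"] by auto
      then show ?thesis by blast
    qed
    then show ?thesis unfolding omega_covers_def using mem cov by blast
  qed
  obtain W where W: "\<forall>n. W n \<in> WW n" and rW: "range W \<in> omega_covers_of Y"
    using S WW\<Omega> unfolding S1_def by blast
  define step where "step s = (SOME c. c \<in> Ch s \<and>
      (W (fst (prod_decode (length s))) \<in> Om (length s) \<longrightarrow> W (fst (prod_decode (length s))) \<subseteq> c))" for s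
  have stepp: "step s \<in> Ch s \<and>
      (W (fst (prod_decode (length s))) \<in> Om (length s) \<longrightarrow> W (fst (prod_decode (length s))) \<subseteq> step s)"
    if s: "s \<in> H k" for s k
  proof -
    have len: "length s = k" using Hlen s by blast
    have "\<exists>c. c \<in> Ch s \<and> (W (fst (prod_decode k)) \<in> Om k \<longrightarrow> W (fst (prod_decode k)) \<subseteq> c)"
    proof (cases "W (fst (prod_decode k)) \<in> Om k")
      case True
      then obtain c where c: "W (fst (prod_decode k)) = (\<Inter>s\<in>H k. c s)" "\<forall>s\<in>H k. c s \<in> Ch s"
        unfolding Om_def by blast
      then show ?thesis using s by blast
    next
      case False
      then show ?thesis using Chne by blast
    qed
    then show ?thesis unfolding step_def len by (rule someI_ex)
  qed
  define hist where "hist = rec_nat [] (\<lambda>k h. h @ [step h])"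
  have hist0: "hist 0 = []" unfolding hist_def by simp
  have histS: "hist (Suc k) = hist k @ [step (hist k)]" for k unfolding hist_def by simp
  have histH: "hist k \<in> H k" for k
  proof (induction k)
    case 0 then show ?case by (simp add: hist0 H0)
  next
    case (Suc k)
    have "step (hist k) \<in> Ch (hist k)" using stepp[OF Suc] by blast
    then show ?case unfolding histS HS using Suc by (intro image_eqI[of _ _ "(hist k, step (hist k))"]) auto
  qed
  define T where "T k = step (hist k)" for k
  have histT: "hist k = map T [0..<k]" for k
  proof (induction k)
    case 0 show ?case by (simp add: hist0)
  next
    case (Suc k)
    have "hist (Suc k) = hist k @ [T k]" by (simp only: histS T_def)
    then show ?case using Suc by simp
  qed
  have Tmove: "T n \<in> \<sigma> (map T [0..<n])" for n
  proof -
    have "T n \<in> Ch (hist n)" using stepp[OF histH[of n]] by (simp only: T_def)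
    then have "T n \<in> \<sigma> (hist n)" using Ch[of "hist n"] by blast
    then show ?thesis by (simp only: histT)
  qed
  have "range T \<in> omega_covers_of Y"
    unfolding omega_covers_of_def
  proof (intro CollectI conjI ballI allI impI)
    fix U assume "U \<in> range T"
    then obtain k where U: "U = T k" by blast
    have "U \<in> \<sigma> (map T [0..<k])" using Tmove U by simp
    then show "open U" using \<sigma>open by blast
    have "U \<in> Ch (hist k)" using stepp[OF histH[of k]] U T_def by simp
    then have "- Y \<subseteq> U" "U \<in> \<sigma> (hist k)" using Ch[of "hist k"] by blast+
    then show "\<not> Y \<subseteq> U" using \<sigma>univ[of "hist k"]
      by (metis Compl_partition2 Un_least top.extremum_uniqueI)
  next
    fix F assume F: "finite F \<and> F \<subseteq> Y"
    then obtain n where n: "F \<subseteq> W n" using rW unfolding omega_covers_of_def by auto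
    obtain k where k: "fst (prod_decode k) = n" "W n \<in> Om k" using W[rule_format, of n] unfolding WW_def by blast
    have "length (hist k) = k" using Hlen histH by blast
    then have "W n \<subseteq> T k" using stepp[OF histH[of k]] k unfolding T_def by simp
    then show "\<exists>U\<in>range T. F \<subseteq> U" using n by blast
  qed
  moreover have "range T \<notin> omega_covers_of Y" using w Tmove unfolding ONE_winning_strategy_G1_def by blast
  ultimately show False by blast
qed


lemma easy_dir:
  assumes "\<not> S1 A B"
  shows "ONE_has_winning_strategy_G1 A B"
proof -
  obtain Os :: "nat \<Rightarrow> _" where Os: "\<forall>n. Os n \<in> A" and no: "\<And>T. (\<forall>n. T n \<in> Os n) \<Longrightarrow> range T \<notin> B"
    using assms unfolding S1_def by blast
  have "ONE_winning_strategy_G1 A B (\<lambda>s. Os (length s))"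
    unfolding ONE_winning_strategy_G1_def
  proof (intro conjI allI impI)
    show "Os (length s) \<in> A" for s using Os by blast
    fix T assume "\<forall>n. T n \<in> Os (length (map T [0..<n]))"
    then have "\<forall>n. T n \<in> Os n" by simp
    then show "range T \<notin> B" by (rule no)
  qed
  then show ?thesis unfolding ONE_has_winning_strategy_G1_def by blast
qed

theorem theorem4p5:
  fixes Y :: "'a::uniform_space set"
  assumes separated: "\<And>x y :: 'a. (\<forall>P. eventually P uniformity \<longrightarrow> P (x, y)) \<Longrightarrow> x = y"
    and sigma: "sigma_compact_space TYPE('a)"
  shows "S1 (omega_covers :: 'a set set set) (omega_covers_of Y)
     \<longleftrightarrow> \<not> ONE_has_winning_strategy_G1 (omega_covers :: 'a set set set) (omega_covers_of Y)"
proof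
  assume S: "S1 (omega_covers :: 'a set set set) (omega_covers_of Y)"
  have opn: "open (- {p})" for p :: 'a
    unfolding open_uniformity
  proof (intro ballI)
    fix x assume "x \<in> - {p}"
    then have "x \<noteq> p" by simp
    then have "\<not> (\<forall>P. eventually P uniformity \<longrightarrow> P (x, p))" using separated by metis
    then obtain E where E: "eventually E uniformity" "\<not> E (x, p)" by blast
    show "eventually (\<lambda>(x', y). x' = x \<longrightarrow> y \<in> - {p}) uniformity"
      using E(1) by (rule eventually_mono) (use E(2) in \<open>auto simp: split_beta\<close>)
  qed
  have Pfin: "finite (- Y)"
  proof (rule ccontr)
    assume inf: "infinite (- Y)"
    define \<U> where "\<U> = {- {p} | p. p \<notin> Y}"
    have fin: "\<exists>U\<in>\<U>. F \<subseteq> U" if "finite F" for F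
    proof -
      have "infinite (- Y - F)" using inf that by simp
      then obtain p where "p \<in> - Y - F" using infinite_imp_nonempty by blast
      then show ?thesis unfolding \<U>_def by blast
    qed
    have "\<U> \<in> omega_covers"
      unfolding omega_covers_def
    proof (intro CollectI conjI allI impI ballI)
      show "open U" if "U \<in> \<U>" for U using that opn unfolding \<U>_def by blast
      show "UNIV \<notin> \<U>" unfolding \<U>_def by auto
      show "\<exists>U\<in>\<U>. F \<subseteq> U" if "finite F" for F using fin that by blast
      show "\<Union>\<U> = UNIV"
      proof -
        have "x \<in> \<Union>\<U>" for x using fin[of "{x}"] by auto
        then show ?thesis by blast
      qed
    qed
    then have "\<exists>T :: nat \<Rightarrow> 'a set. (\<forall>n. T n \<in> \<U>) \<and> range T \<in> omega_covers_of Y"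
      using spec[OF S[unfolded S1_def], of "\<lambda>n. \<U>"] by simp
    then obtain T :: "nat \<Rightarrow> 'a set" where T: "\<forall>n. T n \<in> \<U>" and r: "range T \<in> omega_covers_of Y"
      by blast
    obtain p where "T 0 = - {p}" "p \<notin> Y" using T unfolding \<U>_def by blast
    then have "Y \<subseteq> T 0" by auto
    then show False using r unfolding omega_covers_of_def by blast
  qed
  obtain K :: "nat \<Rightarrow> 'a set" where K: "\<And>n. compact (K n)" "(\<Union>n. K n) = UNIV"
    using sigma unfolding sigma_compact_space_def by blast
  define L where "L m = (\<Union>i\<le>m. K i)" for m
  have Lcomp: "compact (L m)" for m unfolding L_def using K(1) by (intro compact_UN) auto
  have Lbig: "\<exists>N. \<forall>m\<ge>N. F \<subseteq> L m" if "finite F" for F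
    using that
  proof (induction F rule: finite_induct)
    case empty then show ?case by simp
  next
    case (insert x F)
    then obtain N where N: "\<forall>m\<ge>N. F \<subseteq> L m" by blast
    obtain i where i: "x \<in> K i" using K(2) by blast
    have "\<forall>m\<ge>max N i. insert x F \<subseteq> L m" using N i unfolding L_def by auto
    then show ?case by blast
  qed
  show "\<not> ONE_has_winning_strategy_G1 (omega_covers :: 'a set set set) (omega_covers_of Y)"
    unfolding ONE_has_winning_strategy_G1_def
    using hard_dir[OF S Pfin Lcomp Lbig] by blast
next
  assume "\<not> ONE_has_winning_strategy_G1 (omega_covers :: 'a set set set) (omega_covers_of Y)"
  then show "S1 (omega_covers :: 'a set set set) (omega_covers_of Y)" using easy_dir by blast
qed

end
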